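(* If $G$ is a graph with a min-max clique covering satisfying simple intersection, then its compressed cliques graph $\mathcal{C}(G)$ does not contain a suspended cycle.
   Context: A clique covering of a graph is a set of cliques such that every edge lies in at least one of them; $\operatorname{cc}(G)$ is its minimum size. A min-max clique covering is a clique covering of size $\operatorname{cc}(G)$ consisting of maximal cliques; it has simple intersection if no three distinct cliques of it share a vertex. Given such a covering $\{C_1,\dots,C_\ell\}$, put $C_{i,j}=C_i\cap C_j$ ($i\ne j$) and $C_{i,i}=C_i\setminus\bigcup_{j\ne i}C_j$; the compressed cliques graph $\mathcal{C}(G)$ has a vertex $v_{i,j}$ for each non-empty $C_{i,j}$ (including $i=j$), with $v_{i,j}\sim v_{i',j'}$ iff $\{i,j\}\cap\{i',j'\}\ne\emptyset$. A cycle $u_1u_2\cdots u_tu_1$ in a graph $X$ is suspended if exactly one of $u_1,\dots,u_t$ has degree larger than two in $X$ and all the others have degree two in $X$. *)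

theory Defs
  imports Main
begin

definition sgraph :: "'a set \<Rightarrow> ('a \<Rightarrow> 'a \<Rightarrow> bool) \<Rightarrow> bool" where
  "sgraph V E \<longleftrightarrow> finite V \<and> (\<forall>x y. E x y \<longrightarrow> x \<in> V \<and> y \<in> V)
     \<and> (\<forall>x y. E x y \<longrightarrow> E y x) \<and> (\<forall>x. \<not> E x x)"

definition clique :: "'a set \<Rightarrow> ('a \<Rightarrow> 'a \<Rightarrow> bool) \<Rightarrow> 'a set \<Rightarrow> bool" where
  "clique V E C \<longleftrightarrow> C \<subseteq> V \<and> (\<forall>x\<in>C. \<forall>y\<in>C. x \<noteq> y \<longrightarrow> E x y)"

definition maximal_clique :: "'a set \<Rightarrow> ('a \<Rightarrow> 'a \<Rightarrow> bool) \<Rightarrow> 'a set \<Rightarrow> bool" where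
  "maximal_clique V E C \<longleftrightarrow> clique V E C \<and> (\<forall>D. clique V E D \<and> C \<subseteq> D \<longrightarrow> D = C)"

definition clique_covering :: "'a set \<Rightarrow> ('a \<Rightarrow> 'a \<Rightarrow> bool) \<Rightarrow> 'a set set \<Rightarrow> bool" where
  "clique_covering V E \<C> \<longleftrightarrow> finite \<C> \<and> (\<forall>C\<in>\<C>. clique V E C)
     \<and> (\<forall>x y. E x y \<longrightarrow> (\<exists>C\<in>\<C>. x \<in> C \<and> y \<in> C))"

definition cc :: "'a set \<Rightarrow> ('a \<Rightarrow> 'a \<Rightarrow> bool) \<Rightarrow> nat" where
  "cc V E = (LEAST k. \<exists>\<C>. clique_covering V E \<C> \<and> card \<C> = k)"

definition min_max_clique_covering :: "'a set \<Rightarrow> ('a \<Rightarrow> 'a \<Rightarrow> bool) \<Rightarrow> 'a set set \<Rightarrow> bool" where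
  "min_max_clique_covering V E \<C> \<longleftrightarrow> clique_covering V E \<C> \<and> card \<C> = cc V E
     \<and> (\<forall>C\<in>\<C>. maximal_clique V E C)"

definition simple_intersection :: "'a set set \<Rightarrow> bool" where
  "simple_intersection \<C> \<longleftrightarrow> (\<forall>C1\<in>\<C>. \<forall>C2\<in>\<C>. \<forall>C3\<in>\<C>.
     C1 \<noteq> C2 \<and> C1 \<noteq> C3 \<and> C2 \<noteq> C3 \<longrightarrow> C1 \<inter> C2 \<inter> C3 = {})"

text \<open>Vertices of the compressed cliques graph are index sets S = {C_i} (for C_{i,i})
  or S = {C_i, C_j}, i \<noteq> j (for C_{i,j} = C_{j,i}).\<close>
definition cpart :: "'a set set \<Rightarrow> 'a set set \<Rightarrow> 'a set" where
  "cpart \<C> S = (if card S = 1 then \<Inter>S - \<Union>(\<C> - S) else \<Inter>S)"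

definition compressed_V :: "'a set set \<Rightarrow> 'a set set set" where
  "compressed_V \<C> = {S. S \<subseteq> \<C> \<and> (card S = 1 \<or> card S = 2) \<and> cpart \<C> S \<noteq> {}}"

definition compressed_E :: "'a set set \<Rightarrow> 'a set set \<Rightarrow> 'a set set \<Rightarrow> bool" where
  "compressed_E \<C> S T \<longleftrightarrow> S \<in> compressed_V \<C> \<and> T \<in> compressed_V \<C> \<and> S \<noteq> T \<and> S \<inter> T \<noteq> {}"

definition degree :: "'b set \<Rightarrow> ('b \<Rightarrow> 'b \<Rightarrow> bool) \<Rightarrow> 'b \<Rightarrow> nat" where
  "degree V E v = card {u\<in>V. E v u}"

definition suspended_cycle :: "'b set \<Rightarrow> ('b \<Rightarrow> 'b \<Rightarrow> bool) \<Rightarrow> 'b list \<Rightarrow> bool" where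
  "suspended_cycle V E us \<longleftrightarrow> length us \<ge> 3 \<and> distinct us \<and> set us \<subseteq> V
     \<and> (\<forall>i < length us. E (us ! i) (us ! ((i + 1) mod length us)))
     \<and> (\<exists>k < length us. degree V E (us ! k) > 2
          \<and> (\<forall>i < length us. i \<noteq> k \<longrightarrow> degree V E (us ! i) = 2))"

end

theory Submission
  imports Defs
begin

definition NB :: "'a set set \<Rightarrow> 'a set set \<Rightarrow> 'a set set set" where
  "NB C X = {u \<in> compressed_V C. u \<noteq> X \<and> u \<inter> X \<noteq> {}}"

lemma CV_cases:
  assumes "S \<in> compressed_V C"
  obtains i where "S = {i}" "i \<in> C"
  | i j where "S = {i, j}" "i \<noteq> j" "i \<in> C" "j \<in> C"
proof -
  have S: "S \<subseteq> C" "card S = 1 \<or> card S = 2" using assms by (auto simp: compressed_V_def)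
  show ?thesis
  proof (cases "card S = 1")
    case True
    then obtain i where "S = {i}" by (auto simp: card_1_singleton_iff)
    then show ?thesis using that S by auto
  next
    case False
    then have "card S = 2" using S by auto
    then obtain i j where "S = {i, j}" "i \<noteq> j" by (auto simp: card_2_iff)
    then show ?thesis using that S by auto
  qed
qed

lemma CV_le2:
  assumes "S \<in> compressed_V C" "a \<in> S" "b \<in> S" "a \<noteq> b"
  shows "S = {a, b}"
  using assms(1) by (cases rule: CV_cases) (use assms in auto)

lemma finite_CV:
  assumes "finite C" shows "finite (compressed_V C)"
proof -
  have "compressed_V C \<subseteq> Pow C" by (auto simp: compressed_V_def)
  then show ?thesis using assms by (meson finite_Pow_iff finite_subset)
qed

lemma deg_NB:
  "v \<in> compressed_V C \<Longrightarrow> degree (compressed_V C) (compressed_E C) v = card (NB C v)"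
  unfolding degree_def NB_def compressed_E_def
  by (rule arg_cong[where f=card]) auto

lemma card2_eq:
  assumes "finite X" "card X = 2" "a \<in> X" "b \<in> X" "a \<noteq> b"
  shows "X = {a, b}"
proof -
  have "{a,b} \<subseteq> X" using assms by auto
  moreover have "card {a,b} = card X" using assms by auto
  ultimately show ?thesis using assms(1) by (metis card_subset_eq)
qed

lemma lemM:
  assumes mm: "min_max_clique_covering V E C"
    and cd: "{c, d} \<in> compressed_V C" "c \<noteq> d"
  shows "\<exists>T \<in> compressed_V C. d \<in> T \<and> T \<noteq> {c, d}"
proof -
  have "{c, d} \<subseteq> C" using cd(1) unfolding compressed_V_def by blast
  then have cC: "c \<in> C" "d \<in> C" by auto
  have mc: "maximal_clique V E c" "maximal_clique V E d" using mm cC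
    unfolding min_max_clique_covering_def by auto
  have "\<not> d \<subseteq> c"
  proof
    assume "d \<subseteq> c"
    moreover have "clique V E c" using mc(1) unfolding maximal_clique_def by blast
    ultimately have "c = d" using mc(2) unfolding maximal_clique_def by blast
    then show False using cd(2) by simp
  qed
  then obtain x where x: "x \<in> d" "x \<notin> c" by auto
  show ?thesis
  proof (cases "\<exists>e \<in> C. e \<noteq> d \<and> x \<in> e")
    case True
    then obtain e where e: "e \<in> C" "e \<noteq> d" "x \<in> e" by blast
    have ec: "e \<noteq> c" using e(3) x(2) by metis
    have c2: "card {d, e} = 2" using e(2) by simp
    have cp: "cpart C {d, e} = d \<inter> e" unfolding cpart_def using c2 by simp
    have "x \<in> cpart C {d, e}" unfolding cp using x(1) e(3) by blast
    then have ne: "cpart C {d, e} \<noteq> {}" by blast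
    have sub: "{d, e} \<subseteq> C" using e(1) cC(2) by blast
    have mem: "{d, e} \<in> compressed_V C"
      unfolding compressed_V_def mem_Collect_eq using c2 ne sub by simp
    moreover have neq: "{d, e} \<noteq> {c, d}"
    proof
      assume "{d, e} = {c, d}"
      then have "e \<in> {c, d}" by blast
      then show False using ec e(2) by blast
    qed
    show ?thesis by (rule bexI[where x="{d, e}"]) (use mem neq in simp_all)
  next
    case False
    have c1: "card {d} = 1" by simp
    have cp: "cpart C {d} = d - \<Union>(C - {d})" unfolding cpart_def by simp
    have "x \<in> cpart C {d}" unfolding cp using False x(1) by blast
    then have ne: "cpart C {d} \<noteq> {}" by blast
    have sub: "{d} \<subseteq> C" using cC(2) by blast
    have mem: "{d} \<in> compressed_V C"
      unfolding compressed_V_def mem_Collect_eq using c1 ne sub by simp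
    have neq: "{d} \<noteq> {c, d}" using cd(2) by blast
    show ?thesis by (rule bexI[where x="{d}"]) (use mem neq in simp_all)
  qed
qed

lemma cE_D:
  assumes "compressed_E C S T"
  shows "S \<in> compressed_V C" "T \<in> compressed_V C" "S \<noteq> T" "S \<inter> T \<noteq> {}"
    "T \<in> NB C S" "S \<in> NB C T"
  using assms unfolding compressed_E_def NB_def by blast+

lemma core:
  assumes mm: "min_max_clique_covering V E C"
    and HA: "compressed_E C H A" and AA2: "compressed_E C A A2" and A2H: "A2 \<noteq> H"
    and dA: "degree (compressed_V C) (compressed_E C) A = 2"
    and dA2: "degree (compressed_V C) (compressed_E C) A2 = 2"
  shows "\<exists>a. a \<in> H \<and> a \<in> A \<and> {S \<in> compressed_V C. a \<in> S} = {A, H}"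
proof -
  have fC: "finite C" using mm unfolding min_max_clique_covering_def clique_covering_def by blast
  have fin: "\<And>X. finite (NB C X)" unfolding NB_def using finite_CV[OF fC] by simp
  have Hv: "H \<in> compressed_V C" and Av: "A \<in> compressed_V C" and A2v: "A2 \<in> compressed_V C"
    using cE_D HA AA2 by blast+
  have HnA: "H \<noteq> A" using cE_D(3)[OF HA] .
  have NA: "NB C A = {H, A2}"
    using card2_eq[OF fin _ cE_D(6)[OF HA] cE_D(5)[OF AA2]] dA deg_NB[OF Av] A2H by metis
  have cNA2: "card (NB C A2) = 2" using dA2 deg_NB[OF A2v] by simp
  show ?thesis
    using Av
  proof (cases rule: CV_cases)
    case (1 i)
    have iA2: "i \<in> A2" using cE_D(4)[OF AA2] 1 by blast
    have iH: "i \<in> H" using cE_D(4)[OF HA] 1 by blast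
    have A2nA: "A2 \<noteq> A" using cE_D(3)[OF AA2] by simp
    obtain j where j: "A2 = {i, j}" "i \<noteq> j"
      using A2v
    proof (cases rule: CV_cases)
      case (1 i')
      then show ?thesis using iA2 A2nA \<open>A = {i}\<close> by blast
    next
      case (2 i' j')
      then show ?thesis using that iA2 by (metis insert_commute insertE singletonD)
    qed
    obtain T where T: "T \<in> compressed_V C" "j \<in> T" "T \<noteq> {i, j}"
      using lemM[OF mm _ j(2)] A2v j(1) by blast
    have TnH: "T \<noteq> H"
    proof
      assume "T = H"
      then have "H = {i, j}" using CV_le2[OF Hv iH] T(2) j(2) by blast
      then show False using A2H j(1) by simp
    qed
    have TnA: "T \<noteq> A" using T(2) j(2) 1 by blast
    have sub: "{A, H, T} \<subseteq> NB C A2"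
      using cE_D(6)[OF AA2] iH j T A2H Hv unfolding NB_def by blast
    have "card {A, H, T} = 3" using HnA TnH TnA by auto
    then have "3 \<le> card (NB C A2)" using card_mono[OF fin sub] by simp
    then show ?thesis using cNA2 by simp
  next
    case (2 a b)
    obtain x y where xy: "A = {x, y}" "x \<noteq> y" "x \<in> H"
      using cE_D(4)[OF HA] 2 by (metis disjoint_iff insertE insert_commute singletonD)
    have "{S \<in> compressed_V C. x \<in> S} = {A, H}"
    proof (rule set_eqI, rule iffI)
      fix S assume S: "S \<in> {S \<in> compressed_V C. x \<in> S}"
      show "S \<in> {A, H}"
      proof (rule ccontr)
        assume nS: "S \<notin> {A, H}"
        then have "S \<in> NB C A" using S xy unfolding NB_def by blast
        then have SA2: "S = A2" using NA nS by blast
        obtain T where T: "T \<in> compressed_V C" "y \<in> T" "T \<noteq> {x, y}"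
          using lemM[OF mm _ xy(2)] Av xy(1) by blast
        have "T \<in> NB C A" using T xy unfolding NB_def by blast
        then have "T = H \<or> T = A2" using NA by blast
        moreover have "x \<in> A2" using S SA2 by blast
        ultimately have "x \<in> T" using xy(3) by blast
        then have "T = {x, y}" using CV_le2[OF T(1) _ T(2) xy(2)] by blast
        then show False using T(3) by simp
      qed
    next
      fix S assume "S \<in> {A, H}"
      then show "S \<in> {S \<in> compressed_V C. x \<in> S}" using Av Hv xy by blast
    qed
    then show ?thesis using xy by blast
  qed
qed

lemma mod_inj_le:
  fixes k i j t :: nat
  assumes "(k + i) mod t = (k + j) mod t" "i \<le> j" "j < t"
  shows "i = j"
proof -
  have le: "k + i \<le> k + j" using assms(2) by simp
  have "t dvd (k + j) - (k + i)" using mod_eq_dvd_iff_nat[OF le, of t] assms(1) by simp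
  then have "t dvd j - i" by simp
  moreover have "j - i < t" using assms by simp
  ultimately have "j - i = 0" using dvd_imp_le by (metis gr0I leD)
  then show ?thesis using assms(2) by simp
qed

lemma mod_inj:
  fixes k i j t :: nat
  assumes "(k + i) mod t = (k + j) mod t" "i < t" "j < t"
  shows "i = j"
  using mod_inj_le[of k i t j] mod_inj_le[of k j t i] assms by (cases "i \<le> j") auto

theorem mainTheorem19:
  fixes V :: "'a set" and E :: "'a \<Rightarrow> 'a \<Rightarrow> bool" and \<C> :: "'a set set"
  assumes "sgraph V E"
    and "min_max_clique_covering V E \<C>"
    and "simple_intersection \<C>"
  shows "\<not> (\<exists>us. suspended_cycle (compressed_V \<C>) (compressed_E \<C>) us)"
proof
  assume "\<exists>us. suspended_cycle (compressed_V \<C>) (compressed_E \<C>) us"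
  then obtain us where sc: "suspended_cycle (compressed_V \<C>) (compressed_E \<C>) us" by blast
  define t where "t = length us"
  define CV where "CV = compressed_V \<C>"
  define cE where "cE = compressed_E \<C>"
  have t3: "t \<ge> 3" and dist: "distinct us" and sub: "set us \<subseteq> CV"
    and edge: "\<And>i. i < t \<Longrightarrow> cE (us ! i) (us ! ((i + 1) mod t))"
    using sc unfolding suspended_cycle_def t_def CV_def cE_def by auto
  obtain k where k: "k < t" "degree CV cE (us ! k) > 2"
    and d2: "\<And>i. i < t \<Longrightarrow> i \<noteq> k \<Longrightarrow> degree CV cE (us ! i) = 2"
    using sc unfolding suspended_cycle_def t_def CV_def cE_def by auto
  define p where "p i = (k + i) mod t" for i
  have pk: "p 0 = k" using k(1) unfolding p_def by simp
  have plt: "p i < t" for i unfolding p_def using t3 by simp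
  have pinj: "p i = p j \<Longrightarrow> i < t \<Longrightarrow> j < t \<Longrightarrow> i = j" for i j
    unfolding p_def using mod_inj by blast
  have pnext: "(p i + 1) mod t = p (i + 1)" for i unfolding p_def by (simp add: mod_Suc_eq)
  have ed: "cE (us ! p i) (us ! p (i + 1))" for i using edge[OF plt] pnext by simp
  have neq: "us ! p i \<noteq> us ! p j" if "i < t" "j < t" "i \<noteq> j" for i j
    using dist plt pinj that by (metis nth_eq_iff_index_eq t_def)
  have deg2: "degree CV cE (us ! p i) = 2" if "0 < i" "i < t" for i
    using d2[OF plt] pinj[of i 0] that pk t3 by fastforce
  have symE: "cE S T \<Longrightarrow> cE T S" for S T unfolding cE_def compressed_E_def by blast
  have "p t = p 0" unfolding p_def by simp
  have t1: "t - 1 + 1 = t" "t - 2 + 1 = t - 1" using t3 by auto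
  have p1: "Suc 0 = 1" by simp
  have eA: "cE (us ! k) (us ! p 1)" using ed[of 0] pk by simp
  have eA2: "cE (us ! p 1) (us ! p 2)" using ed[of 1] by (simp add: numeral_2_eq_2)
  have nA2: "us ! p 2 \<noteq> us ! k" using neq[of 2 0] t3 pk by simp
  have dA: "degree CV cE (us ! p 1) = 2" using deg2[of 1] t3 by simp
  have dA2: "degree CV cE (us ! p 2) = 2" using deg2[of 2] t3 by simp
  have "\<exists>a. a \<in> us ! k \<and> a \<in> us ! p 1 \<and> {S \<in> compressed_V \<C>. a \<in> S} = {us ! p 1, us ! k}"
    using core[OF assms(2) eA[unfolded cE_def] eA2[unfolded cE_def] nA2
        dA[unfolded CV_def cE_def] dA2[unfolded CV_def cE_def]] .
  then obtain a where a: "a \<in> us ! k" "a \<in> us ! p 1" "{S \<in> CV. a \<in> S} = {us ! p 1, us ! k}"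
    unfolding CV_def by blast
  have e1: "cE (us ! p (t - 1)) (us ! k)" using ed[of "t - 1"] t1 \<open>p t = p 0\<close> pk by simp
  have e2: "cE (us ! p (t - 2)) (us ! p (t - 1))" using ed[of "t - 2"] t1 by simp
  have nB2: "us ! p (t - 2) \<noteq> us ! k" using neq[of "t - 2" 0] t3 pk by simp
  have dB: "degree CV cE (us ! p (t - 1)) = 2" using deg2[of "t - 1"] t3 by simp
  have dB2: "degree CV cE (us ! p (t - 2)) = 2" using deg2[of "t - 2"] t3 by simp
  have "\<exists>c. c \<in> us ! k \<and> c \<in> us ! p (t - 1) \<and> {S \<in> compressed_V \<C>. c \<in> S} = {us ! p (t - 1), us ! k}"
    using core[OF assms(2) symE[OF e1, unfolded cE_def] symE[OF e2, unfolded cE_def] nB2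
        dB[unfolded CV_def cE_def] dB2[unfolded CV_def cE_def]] .
  then obtain c where c: "c \<in> us ! k" "c \<in> us ! p (t - 1)"
      "{S \<in> CV. c \<in> S} = {us ! p (t - 1), us ! k}"
    unfolding CV_def by blast
  have ABne: "us ! p 1 \<noteq> us ! p (t - 1)" using neq[of 1 "t - 1"] t3 by simp
  have HA: "us ! k \<noteq> us ! p 1" using neq[of 0 1] t3 pk by simp
  have HB: "us ! k \<noteq> us ! p (t - 1)" using neq[of 0 "t - 1"] t3 pk by simp
  have ac: "a \<noteq> c"
  proof
    assume "a = c"
    then have "{us ! p 1, us ! k} = {us ! p (t - 1), us ! k}" using a(3) c(3) by simp
    then show False using ABne HA HB by (metis doubleton_eq_iff)
  qed
  have Hv: "us ! k \<in> CV" using sub k(1) t_def by auto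
  have Heq: "us ! k = {a, c}" using CV_le2[of "us ! k" \<C> a c] Hv a(1) c(1) ac
    unfolding CV_def by blast
  have "NB \<C> (us ! k) \<subseteq> {us ! p 1, us ! p (t - 1)}"
  proof
    fix u assume "u \<in> NB \<C> (us ! k)"
    then have u: "u \<in> CV" "u \<noteq> us ! k" "u \<inter> {a, c} \<noteq> {}"
      unfolding NB_def CV_def using Heq by auto
    then have "u \<in> {S \<in> CV. a \<in> S} \<or> u \<in> {S \<in> CV. c \<in> S}" by blast
    then show "u \<in> {us ! p 1, us ! p (t - 1)}" using a(3) c(3) u(2) by blast
  qed
  then have "card (NB \<C> (us ! k)) \<le> 2"
  proof -
    have "card {us ! p 1, us ! p (t - 1)} \<le> 2" by (simp add: card_insert_if)
    then show ?thesis using card_mono[OF _ \<open>NB \<C> (us ! k) \<subseteq> _\<close>] by simp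
  qed
  then show False using k(2) deg_NB[of "us ! k" \<C>] Hv unfolding CV_def cE_def by simp
qed

end
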